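(* Let $x,w\in W$ and $s=s_\alpha$ with $\alpha$ a simple root, and assume $x<w$, $sw<w$ and $x<sx$. If $\#S(x,w)=\ell(w)-\ell(x)$, then $S(x,sw)=S(x,w)\setminus\{-w^{-1}\alpha\}$.
   Context: Let $W$ be the Weyl group of a finite reduced root system $\Phi$ with positive roots $\Phi_+$, length $\ell$ and Bruhat order $\le$. For $x\le w$, $S(x,w)=\{\beta\in\Phi_+: x\le ws_\beta<w\}$. *)

theory Defs
  imports "HOL-Analysis.Analysis"
begin

definition refl :: "'a::real_inner \<Rightarrow> 'a \<Rightarrow> 'a" where
  "refl a v = v - (2 * (v \<bullet> a) / (a \<bullet> a)) *\<^sub>R a"

definition root_system :: "'a::euclidean_space set \<Rightarrow> bool" where
  "root_system \<Phi> \<longleftrightarrow> finite \<Phi> \<and> 0 \<notin> \<Phi> \<and> span \<Phi> = UNIV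
     \<and> (\<forall>a\<in>\<Phi>. \<forall>b\<in>\<Phi>. refl a b \<in> \<Phi>)
     \<and> (\<forall>a\<in>\<Phi>. \<forall>b\<in>\<Phi>. 2 * (b \<bullet> a) / (a \<bullet> a) \<in> \<int>)
     \<and> (\<forall>a\<in>\<Phi>. \<forall>c::real. c *\<^sub>R a \<in> \<Phi> \<longrightarrow> c = 1 \<or> c = -1)"

definition positive_system :: "'a::euclidean_space set \<Rightarrow> 'a set \<Rightarrow> bool" where
  "positive_system \<Phi> P \<longleftrightarrow> P \<subseteq> \<Phi> \<and>
     (\<exists>u. (\<forall>b\<in>\<Phi>. u \<bullet> b \<noteq> 0) \<and> P = {b\<in>\<Phi>. u \<bullet> b > 0})"

definition simple_roots :: "'a::euclidean_space set \<Rightarrow> 'a set" where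
  "simple_roots P = {a\<in>P. \<not> (\<exists>b\<in>P. \<exists>c\<in>P. a = b + c)}"

inductive_set weyl_group :: "'a::euclidean_space set \<Rightarrow> ('a \<Rightarrow> 'a) set" for \<Phi> where
  weyl_id: "id \<in> weyl_group \<Phi>"
| weyl_step: "w \<in> weyl_group \<Phi> \<Longrightarrow> a \<in> \<Phi> \<Longrightarrow> refl a \<circ> w \<in> weyl_group \<Phi>"

definition word_prod :: "'a::euclidean_space list \<Rightarrow> 'a \<Rightarrow> 'a" where
  "word_prod as = foldr (\<lambda>a f. refl a \<circ> f) as id"

definition weyl_length :: "'a::euclidean_space set \<Rightarrow> ('a \<Rightarrow> 'a) \<Rightarrow> nat" where
  "weyl_length P w = (LEAST n. \<exists>as. set as \<subseteq> simple_roots P \<and> length as = n \<and> word_prod as = w)"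

inductive bruhat_le :: "'a::euclidean_space set \<Rightarrow> 'a set \<Rightarrow> ('a \<Rightarrow> 'a) \<Rightarrow> ('a \<Rightarrow> 'a) \<Rightarrow> bool"
  for \<Phi> P where
  bruhat_refl: "x \<in> weyl_group \<Phi> \<Longrightarrow> bruhat_le \<Phi> P x x"
| bruhat_step: "bruhat_le \<Phi> P x y \<Longrightarrow> b \<in> P \<Longrightarrow>
     weyl_length P y < weyl_length P (y \<circ> refl b) \<Longrightarrow> bruhat_le \<Phi> P x (y \<circ> refl b)"

definition bruhat_lt :: "'a::euclidean_space set \<Rightarrow> 'a set \<Rightarrow> ('a \<Rightarrow> 'a) \<Rightarrow> ('a \<Rightarrow> 'a) \<Rightarrow> bool" where
  "bruhat_lt \<Phi> P x y \<longleftrightarrow> bruhat_le \<Phi> P x y \<and> x \<noteq> y"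

definition S_set :: "'a::euclidean_space set \<Rightarrow> 'a set \<Rightarrow> ('a \<Rightarrow> 'a) \<Rightarrow> ('a \<Rightarrow> 'a) \<Rightarrow> 'a set" where
  "S_set \<Phi> P x w = {b\<in>P. bruhat_le \<Phi> P x (w \<circ> refl b) \<and> bruhat_lt \<Phi> P (w \<circ> refl b) w}"

end

theory Submission imports Defs begin

lemma refl_add: "refl a (x + y) = refl a x + refl a y"
  by (simp add: refl_def inner_add_left add_divide_distrib algebra_simps scaleR_add_left)

lemma refl_scale: "refl a (c *\<^sub>R x) = c *\<^sub>R refl a x"
  by (simp add: refl_def algebra_simps)

lemma refl_linear: "linear (refl a)"
  by (rule linearI) (simp_all add: refl_add refl_scale)

lemma refl_self: "a \<noteq> 0 \<Longrightarrow> refl a a = - a"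
  by (simp add: refl_def scaleR_2)

lemma refl_inner_a: "a \<noteq> 0 \<Longrightarrow> refl a v \<bullet> a = - (v \<bullet> a)"
  by (simp add: refl_def inner_diff_left)

lemma refl_refl: "a \<noteq> 0 \<Longrightarrow> refl a (refl a v) = v"
proof -
  assume a: "a \<noteq> 0"
  have "refl a (refl a v) = refl a v - (2 * (refl a v \<bullet> a) / (a \<bullet> a)) *\<^sub>R a"
    by (simp add: refl_def)
  also have "\<dots> = refl a v + (2 * (v \<bullet> a) / (a \<bullet> a)) *\<^sub>R a"
    using a by (simp add: refl_inner_a)
  also have "\<dots> = v" by (simp add: refl_def)
  finally show ?thesis .
qed

lemma refl_comp_self: "a \<noteq> 0 \<Longrightarrow> refl a \<circ> refl a = id"
  by (auto simp: refl_refl)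

lemma refl_inner: "a \<noteq> 0 \<Longrightarrow> refl a x \<bullet> refl a y = x \<bullet> y"
  by (simp add: refl_def inner_diff_left inner_diff_right algebra_simps inner_commute)

lemma refl_neg: "refl (- a) = refl a"
  by (rule ext) (simp add: refl_def)

lemma refl_conj:
  assumes lin: "linear z" and inn: "\<And>x y. z x \<bullet> z y = x \<bullet> y"
  shows "z \<circ> refl c = refl (z c) \<circ> z"
proof (rule ext)
  fix v
  have "z (refl c v) = z v - (2 * (v \<bullet> c) / (c \<bullet> c)) *\<^sub>R z c"
    unfolding refl_def using lin by (simp add: linear_diff linear_scale)
  also have "\<dots> = refl (z c) (z v)" by (simp add: refl_def inn)
  finally show "(z \<circ> refl c) v = (refl (z c) \<circ> z) v" by simp
qed

locale rs =
  fixes \<Phi> P :: "'a::euclidean_space set"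
  assumes RS: "root_system \<Phi>" and PS: "positive_system \<Phi> P"
begin

definition uu :: 'a where
  "uu = (SOME u. (\<forall>b\<in>\<Phi>. u \<bullet> b \<noteq> 0) \<and> P = {b\<in>\<Phi>. u \<bullet> b > 0})"

lemma uu: "\<forall>b\<in>\<Phi>. uu \<bullet> b \<noteq> 0" "P = {b\<in>\<Phi>. uu \<bullet> b > 0}"
proof -
  have "\<exists>u. (\<forall>b\<in>\<Phi>. u \<bullet> b \<noteq> 0) \<and> P = {b\<in>\<Phi>. u \<bullet> b > 0}"
    using PS by (auto simp: positive_system_def)
  then have "(\<forall>b\<in>\<Phi>. uu \<bullet> b \<noteq> 0) \<and> P = {b\<in>\<Phi>. uu \<bullet> b > 0}"
    unfolding uu_def by (rule someI_ex)
  then show "\<forall>b\<in>\<Phi>. uu \<bullet> b \<noteq> 0" "P = {b\<in>\<Phi>. uu \<bullet> b > 0}" by auto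
qed

lemma fin: "finite \<Phi>" and nz: "0 \<notin> \<Phi>"
  and reflPhi: "a \<in> \<Phi> \<Longrightarrow> b \<in> \<Phi> \<Longrightarrow> refl a b \<in> \<Phi>"
  and cryst: "a \<in> \<Phi> \<Longrightarrow> b \<in> \<Phi> \<Longrightarrow> 2 * (b \<bullet> a) / (a \<bullet> a) \<in> \<int>"
  and reduced: "a \<in> \<Phi> \<Longrightarrow> c *\<^sub>R a \<in> \<Phi> \<Longrightarrow> c = 1 \<or> c = -1"
  using RS by (auto simp: root_system_def)

lemma nz': "a \<in> \<Phi> \<Longrightarrow> a \<noteq> 0" using nz by auto

lemma negPhi: "a \<in> \<Phi> \<Longrightarrow> - a \<in> \<Phi>"
  using reflPhi[of a a] by (simp add: refl_self nz')

lemma PPhi: "b \<in> P \<Longrightarrow> b \<in> \<Phi>" using uu(2) by auto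

lemma P_iff: "b \<in> P \<longleftrightarrow> b \<in> \<Phi> \<and> uu \<bullet> b > 0" using uu(2) by auto

lemma notP_neg: "b \<in> \<Phi> \<Longrightarrow> b \<notin> P \<Longrightarrow> - b \<in> P"
proof -
  assume b: "b \<in> \<Phi>" "b \<notin> P"
  then have "uu \<bullet> b < 0" using uu(1) P_iff[of b] by (meson linorder_neqE_linordered_idom)
  then show "- b \<in> P" using P_iff[of "-b"] negPhi[OF b(1)] by simp
qed

lemma P_neg: "b \<in> P \<Longrightarrow> - b \<notin> P"
  using P_iff[of b] P_iff[of "-b"] by simp

lemma simpleP: "a \<in> simple_roots P \<Longrightarrow> a \<in> P"
  by (simp add: simple_roots_def)

lemma simple_nodec: "a \<in> simple_roots P \<Longrightarrow> b \<in> P \<Longrightarrow> c \<in> P \<Longrightarrow> a \<noteq> b + c"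
  by (auto simp: simple_roots_def)

abbreviation "W \<equiv> weyl_group \<Phi>"

lemma W_props: "w \<in> W \<Longrightarrow> linear w \<and> (\<forall>x y. w x \<bullet> w y = x \<bullet> y) \<and> (\<forall>b\<in>\<Phi>. w b \<in> \<Phi>)"
proof (induction rule: weyl_group.induct)
  case weyl_id
  then show ?case using linear_id by (simp add: id_def)
next
  case (weyl_step w a)
  have a0: "a \<noteq> 0" using weyl_step nz' by blast
  have l: "linear (refl a \<circ> w)" using linear_compose[of w "refl a"] weyl_step refl_linear by blast
  have i: "\<forall>x y. (refl a \<circ> w) x \<bullet> (refl a \<circ> w) y = x \<bullet> y"
    using weyl_step refl_inner[OF a0] by simp
  have p: "\<forall>b\<in>\<Phi>. (refl a \<circ> w) b \<in> \<Phi>" using weyl_step reflPhi by simp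
  show ?case using l i p by blast
qed

lemma W_lin: "w \<in> W \<Longrightarrow> linear w" using W_props by blast
lemma W_inner: "w \<in> W \<Longrightarrow> w x \<bullet> w y = x \<bullet> y" using W_props by blast
lemma W_Phi: "w \<in> W \<Longrightarrow> b \<in> \<Phi> \<Longrightarrow> w b \<in> \<Phi>" using W_props by blast

lemma W_conj: "w \<in> W \<Longrightarrow> w \<circ> refl c = refl (w c) \<circ> w"
  by (rule refl_conj) (auto simp: W_lin W_inner)

lemma W_comp: "w1 \<in> W \<Longrightarrow> w2 \<in> W \<Longrightarrow> w1 \<circ> w2 \<in> W"
proof (induction rule: weyl_group.induct)
  case weyl_id
  then show ?case by simp
next
  case (weyl_step w a)
  then have "refl a \<circ> (w \<circ> w2) \<in> W" by (intro weyl_group.weyl_step) (auto simp: o_def)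
  then show ?case by (simp only: o_assoc)
qed

lemma refl_W: "a \<in> \<Phi> \<Longrightarrow> refl a \<in> W"
  using weyl_group.weyl_step[OF weyl_group.weyl_id, of a \<Phi>] by simp

lemma W_inv_ex: "w \<in> W \<Longrightarrow> \<exists>w'\<in>W. w' \<circ> w = id \<and> w \<circ> w' = id"
proof (induction rule: weyl_group.induct)
  case weyl_id
  then show ?case by (intro bexI[of _ id] weyl_group.weyl_id) auto
next
  case (weyl_step w a)
  then obtain w' where w': "w' \<in> W" "w' \<circ> w = id" "w \<circ> w' = id" by blast
  have r: "refl a \<circ> refl a = id" using weyl_step nz' refl_comp_self by blast
  show ?case
  proof (intro bexI[of _ "w' \<circ> refl a"] conjI)
    show "w' \<circ> refl a \<in> W" using W_comp[OF w'(1) refl_W[OF weyl_step(2)]] .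
    show "w' \<circ> refl a \<circ> (refl a \<circ> w) = id"
      by (metis (no_types, lifting) comp_assoc r w'(2) id_comp)
    show "refl a \<circ> w \<circ> (w' \<circ> refl a) = id"
      by (metis (no_types, lifting) comp_assoc r w'(3) id_comp)
  qed
qed

lemma inv_W: assumes "w \<in> W" shows "inv w \<in> W" "inv w \<circ> w = id" "w \<circ> inv w = id"
proof -
  obtain w' where w': "w' \<in> W" "w' \<circ> w = id" "w \<circ> w' = id" using W_inv_ex[OF assms] by blast
  then have "inv w = w'" by (intro inv_unique_comp) auto
  then show "inv w \<in> W" "inv w \<circ> w = id" "w \<circ> inv w = id" using w' by auto
qed

lemma inv_app: "w \<in> W \<Longrightarrow> w (inv w v) = v"
  using inv_W(3)[of w] by (metis comp_apply id_apply)

lemma word_cons: "word_prod (a # as) = refl a \<circ> word_prod as"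
  by (simp add: word_prod_def)

lemma word_nil: "word_prod [] = id"
  by (simp add: word_prod_def)

lemma word_append: "word_prod (as @ bs) = word_prod as \<circ> word_prod bs"
  by (induction as) (auto simp: word_cons word_nil o_assoc)

lemma word_W: "set as \<subseteq> \<Phi> \<Longrightarrow> word_prod as \<in> W"
  by (induction as) (auto simp: word_cons word_nil intro: weyl_group.intros)

lemma aa_pos: "a \<in> \<Phi> \<Longrightarrow> a \<bullet> a > 0" using nz' by simp

lemma nonparallel:
  assumes a: "a \<in> P" and b: "b \<in> P" and ne: "b \<noteq> a"
  shows "(b \<bullet> a)^2 < (a \<bullet> a) * (b \<bullet> b)"
proof (rule ccontr)
  assume "\<not> ?thesis"
  then have h: "(a \<bullet> a) * (b \<bullet> b) \<le> (b \<bullet> a)^2" by simp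
  have aa: "a \<bullet> a > 0" using aa_pos PPhi a by blast
  define t where "t = (b \<bullet> a) / (a \<bullet> a)"
  define v where "v = b - t *\<^sub>R a"
  have "v \<bullet> v = b \<bullet> b - 2 * t * (b \<bullet> a) + t * t * (a \<bullet> a)"
    by (simp add: v_def inner_diff_left inner_diff_right inner_commute algebra_simps)
  also have "\<dots> = b \<bullet> b - (b \<bullet> a)^2 / (a \<bullet> a)"
    using aa by (simp add: t_def field_simps power2_eq_square)
  also have "\<dots> \<le> 0" using h aa by (simp add: field_simps)
  finally have "v \<bullet> v \<le> 0" .
  then have "v = 0" using inner_gt_zero_iff[of v] by linarith
  then have "b = t *\<^sub>R a" by (simp add: v_def)
  then have "t = 1 \<or> t = -1" using reduced[of a t] PPhi a b by auto
  then show False using \<open>b = t *\<^sub>R a\<close> ne P_neg[OF a] b by auto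
qed

lemma simple_refl_pos:
  assumes al: "a \<in> simple_roots P" and b: "b \<in> P" and ne: "b \<noteq> a"
  shows "refl a b \<in> P"
proof (rule ccontr)
  assume nP: "refl a b \<notin> P"
  have aP: "a \<in> P" using al simpleP by blast
  have aPhi: "a \<in> \<Phi>" and bPhi: "b \<in> \<Phi>" using aP b PPhi by auto
  have aa: "a \<bullet> a > 0" and bb: "b \<bullet> b > 0" using aa_pos aPhi bPhi by auto
  define c where "c = 2 * (b \<bullet> a) / (a \<bullet> a)"
  have rb: "refl a b = b - c *\<^sub>R a" by (simp add: refl_def c_def)
  have rbPhi: "refl a b \<in> \<Phi>" using reflPhi aPhi bPhi by blast
  have m1: "c *\<^sub>R a - b \<in> P" using notP_neg[OF rbPhi nP] rb by simp
  have ua: "uu \<bullet> a > 0" and ub: "uu \<bullet> b > 0" using aP b P_iff by auto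
  have "uu \<bullet> (c *\<^sub>R a - b) > 0" using m1 P_iff by blast
  then have "c * (uu \<bullet> a) > uu \<bullet> b" by (simp add: inner_diff_right)
  then have "c * (uu \<bullet> a) > 0" using ub by linarith
  then have cpos: "c > 0" using ua by (simp add: zero_less_mult_iff)
  have "c \<in> \<int>" unfolding c_def using cryst aPhi bPhi by blast
  then obtain k where k: "c = of_int k" by (auto elim: Ints_cases)
  have k1: "k \<ge> 1" using cpos k by simp
  have dec: "\<And>x y. x \<in> P \<Longrightarrow> y \<in> P \<Longrightarrow> a = x + y \<Longrightarrow> False"
    using simple_nodec[OF al] by blast
  show False
  proof (cases "k = 1")
    case True
    then have "a - b \<in> P" using m1 k by simp
    then show False using dec[OF b] by (metis add.commute diff_add_cancel)
  next
    case False
    then have k2: "k \<ge> 2" using k1 by simp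
    have ba: "b \<bullet> a > 0" using cpos aa by (simp add: c_def zero_less_divide_iff)
    define d where "d = 2 * (a \<bullet> b) / (b \<bullet> b)"
    have "d \<in> \<int>" unfolding d_def using cryst aPhi bPhi by blast
    then obtain m where m: "d = of_int m" by (auto elim: Ints_cases)
    have dpos: "d > 0" using ba bb by (simp add: d_def inner_commute)
    have cd: "c * d = 4 * (b \<bullet> a)^2 / ((a \<bullet> a) * (b \<bullet> b))"
      by (simp add: c_def d_def inner_commute power2_eq_square)
    have "c * d < 4" unfolding cd using nonparallel[OF aP b ne] aa bb by (simp add: field_simps)
    then have km: "k * m < 4" using k m by (metis of_int_less_iff of_int_mult of_int_numeral)
    have m1': "m \<ge> 1" using dpos m by simp
    have m_eq: "m = 1"
    proof (rule ccontr)
      assume "m \<noteq> 1"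
      then have "m \<ge> 2" using m1' by simp
      then have "k * m \<ge> 2 * 2" using k2 by (intro mult_mono) auto
      then show False using km by simp
    qed
    have k3: "k \<le> 3" using km m_eq by simp
    have "refl b a = a - b" using m m_eq by (simp add: refl_def d_def[symmetric])
    then have abPhi: "a - b \<in> \<Phi>" using reflPhi[OF bPhi aPhi] by simp
    have "a - b \<notin> P"
    proof
      assume "a - b \<in> P"
      then show False using dec[OF b] by (metis add.commute diff_add_cancel)
    qed
    then have bmaP: "b - a \<in> P" using notP_neg[OF abPhi] by simp
    show False
    proof (cases "k = 2")
      case True
      then have "2 *\<^sub>R a - b \<in> P" using m1 k by simp
      moreover have "a = (b - a) + (2 *\<^sub>R a - b)" by (simp add: scaleR_2)
      ultimately show False using dec bmaP by blast
    next
      case False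
      then have k3': "k = 3" using k2 k3 by simp
      have "refl a (b - a) = b - 2 *\<^sub>R a"
      proof -
        have "2 * ((b - a) \<bullet> a) / (a \<bullet> a) = c - 2"
          using aa by (simp add: c_def inner_diff_left field_simps)
        then have "refl a (b - a) = (b - a) - (c - 2) *\<^sub>R a" by (simp add: refl_def)
        also have "\<dots> = b - 2 *\<^sub>R a" using k k3' by (simp add: algebra_simps scaleR_2)
        finally show ?thesis .
      qed
      then have b2Phi: "b - 2 *\<^sub>R a \<in> \<Phi>"
        using reflPhi[OF aPhi] PPhi[OF bmaP] by metis
      have m3: "3 *\<^sub>R a - b \<in> P" using m1 k k3' by simp
      show False
      proof (cases "b - 2 *\<^sub>R a \<in> P")
        case True
        have "(3::real) *\<^sub>R a = a + 2 *\<^sub>R a"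
          using scaleR_add_left[of 1 2 a] by simp
        then have "a = (b - 2 *\<^sub>R a) + (3 *\<^sub>R a - b)" by (simp add: algebra_simps)
        then show False using dec True m3 by blast
      next
        case False
        then have "2 *\<^sub>R a - b \<in> P" using notP_neg[OF b2Phi] by simp
        moreover have "a = (b - a) + (2 *\<^sub>R a - b)" by (simp add: scaleR_2)
        ultimately show False using dec bmaP by blast
      qed
    qed
  qed
qed

lemma finP: "finite P" using fin PPhi by (meson finite_subset subsetI)

lemma measure_less:
  assumes "b \<in> P" "uu \<bullet> b < uu \<bullet> a"
  shows "card {x\<in>P. uu \<bullet> x < uu \<bullet> b} < card {x\<in>P. uu \<bullet> x < uu \<bullet> a}"
proof (rule psubset_card_mono)
  show "finite {x\<in>P. uu \<bullet> x < uu \<bullet> a}" using finP by simp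
  show "{x\<in>P. uu \<bullet> x < uu \<bullet> b} \<subset> {x\<in>P. uu \<bullet> x < uu \<bullet> a}"
    using assms by auto
qed

lemma cone:
  assumes v: "\<forall>\<alpha>\<in>simple_roots P. v \<bullet> \<alpha> \<le> 0"
  shows "a \<in> P \<Longrightarrow> v \<bullet> a \<le> 0"
proof (induction a rule: measure_induct_rule[of "\<lambda>a. card {x\<in>P. uu \<bullet> x < uu \<bullet> a}"])
  case (less a)
  show ?case
  proof (cases "a \<in> simple_roots P")
    case True
    then show ?thesis using v by blast
  next
    case False
    then obtain b c where bc: "b \<in> P" "c \<in> P" "a = b + c"
      using less.prems by (auto simp: simple_roots_def)
    have "uu \<bullet> b > 0" "uu \<bullet> c > 0" using bc P_iff by auto
    then have "uu \<bullet> b < uu \<bullet> a" "uu \<bullet> c < uu \<bullet> a" using bc by (auto simp: inner_add_right)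
    then have "v \<bullet> b \<le> 0" "v \<bullet> c \<le> 0" using less.IH measure_less bc by auto
    then show ?thesis using bc by (simp add: inner_add_right)
  qed
qed

lemma exists_simple: "a \<in> P \<Longrightarrow> \<exists>\<alpha>\<in>simple_roots P. a \<bullet> \<alpha> > 0"
proof (rule ccontr)
  assume a: "a \<in> P" and "\<not> (\<exists>\<alpha>\<in>simple_roots P. a \<bullet> \<alpha> > 0)"
  then have "\<forall>\<alpha>\<in>simple_roots P. a \<bullet> \<alpha> \<le> 0" by auto
  then have "a \<bullet> a \<le> 0" using cone a by blast
  then show False using aa_pos PPhi a by fastforce
qed

lemma reflP_word: "a \<in> P \<Longrightarrow> \<exists>bs. set bs \<subseteq> simple_roots P \<and> word_prod bs = refl a"
proof (induction a rule: measure_induct_rule[of "\<lambda>a. card {x\<in>P. uu \<bullet> x < uu \<bullet> a}"])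
  case (less a)
  show ?case
  proof (cases "a \<in> simple_roots P")
    case True
    then show ?thesis by (intro exI[of _ "[a]"]) (simp add: word_cons word_nil)
  next
    case False
    obtain al where al: "al \<in> simple_roots P" "a \<bullet> al > 0" using exists_simple less.prems by blast
    have alP: "al \<in> P" using al simpleP by blast
    have alPhi: "al \<in> \<Phi>" using alP PPhi by blast
    have ne: "a \<noteq> al" using al False by blast
    define a' where "a' = refl al a"
    have a'P: "a' \<in> P" unfolding a'_def using simple_refl_pos[OF al(1) less.prems ne] .
    have k: "2 * (a \<bullet> al) / (al \<bullet> al) > 0" using al aa_pos[OF alPhi] by simp
    have ual: "uu \<bullet> al > 0" using alP P_iff by blast
    have "uu \<bullet> a' = uu \<bullet> a - (2 * (a \<bullet> al) / (al \<bullet> al)) * (uu \<bullet> al)"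
      by (simp add: a'_def refl_def inner_diff_right)
    also have "\<dots> < uu \<bullet> a" using mult_pos_pos[OF k ual] by linarith
    finally have "uu \<bullet> a' < uu \<bullet> a" .
    then obtain bs where bs: "set bs \<subseteq> simple_roots P" "word_prod bs = refl a'"
      using less.IH measure_less a'P by blast
    have al0: "al \<noteq> 0" using nz' alPhi by blast
    have "refl al \<circ> refl a' = refl (refl al a') \<circ> refl al"
      using W_conj[OF refl_W[OF alPhi]] .
    also have "refl al a' = a" unfolding a'_def using refl_refl[OF al0] .
    finally have "refl al \<circ> refl a' \<circ> refl al = refl a \<circ> (refl al \<circ> refl al)"
      by (metis comp_assoc)
    then have eq: "refl al \<circ> refl a' \<circ> refl al = refl a" using refl_comp_self[OF al0] by simp
    show ?thesis
      by (intro exI[of _ "al # bs @ [al]"])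
        (use bs al eq in \<open>auto simp: word_cons word_append word_nil o_assoc\<close>)
  qed
qed

lemma reflPhi_word: "a \<in> \<Phi> \<Longrightarrow> \<exists>bs. set bs \<subseteq> simple_roots P \<and> word_prod bs = refl a"
  using reflP_word notP_neg refl_neg by metis

lemma W_word: "w \<in> W \<Longrightarrow> \<exists>as. set as \<subseteq> simple_roots P \<and> word_prod as = w"
proof (induction rule: weyl_group.induct)
  case weyl_id
  then show ?case by (intro exI[of _ "[]"]) (simp add: word_nil)
next
  case (weyl_step w a)
  then obtain as bs where "set as \<subseteq> simple_roots P" "word_prod as = w"
    "set bs \<subseteq> simple_roots P" "word_prod bs = refl a" using reflPhi_word by blast
  then show ?case by (intro exI[of _ "bs @ as"]) (auto simp: word_append)
qed

abbreviation "len \<equiv> weyl_length P"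

lemma simple_Phi: "a \<in> simple_roots P \<Longrightarrow> a \<in> \<Phi>" using simpleP PPhi by blast

lemma len_word: "w \<in> W \<Longrightarrow> \<exists>as. set as \<subseteq> simple_roots P \<and> length as = len w \<and> word_prod as = w"
proof -
  assume "w \<in> W"
  then obtain as where "set as \<subseteq> simple_roots P" "word_prod as = w" using W_word by blast
  then have ex: "\<exists>n as. set as \<subseteq> simple_roots P \<and> length as = n \<and> word_prod as = w" by blast
  show ?thesis unfolding weyl_length_def by (rule LeastI_ex[OF ex])
qed

lemma len_le: "set as \<subseteq> simple_roots P \<Longrightarrow> len (word_prod as) \<le> length as"
  unfolding weyl_length_def by (rule Least_le) blast

lemma W_neg: "w \<in> W \<Longrightarrow> w (- v) = - w v"
  using W_lin linear_neg by blast

lemma deletion: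
  assumes "set as \<subseteq> simple_roots P" "c \<in> P" "word_prod as c \<notin> P"
  shows "\<exists>bs. set bs \<subseteq> simple_roots P \<and> length bs + 1 = length as \<and> word_prod bs = word_prod as \<circ> refl c"
  using assms
proof (induction as)
  case Nil
  then show ?case by (simp add: word_nil)
next
  case (Cons a as)
  define z where "z = word_prod as"
  have a: "a \<in> simple_roots P" and as: "set as \<subseteq> simple_roots P" using Cons.prems by auto
  have zW: "z \<in> W" unfolding z_def using word_W as simple_Phi by blast
  show ?case
  proof (cases "z c \<in> P")
    case False
    then obtain bs where bs: "set bs \<subseteq> simple_roots P" "length bs + 1 = length as"
      "word_prod bs = z \<circ> refl c" using Cons.IH as Cons.prems(2) unfolding z_def by blast
    show ?thesis
      by (intro exI[of _ "a # bs"]) (use bs a in \<open>auto simp: word_cons z_def o_assoc\<close>)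
  next
    case True
    have "refl a (z c) \<notin> P" using Cons.prems(3) by (simp add: word_cons z_def)
    then have zc: "z c = a" using simple_refl_pos[OF a True] by blast
    have a0: "a \<noteq> 0" using a simple_Phi nz' by blast
    have "word_prod (a # as) \<circ> refl c = refl a \<circ> (z \<circ> refl c)" by (simp add: word_cons z_def o_assoc)
    also have "z \<circ> refl c = refl a \<circ> z" using W_conj[OF zW] zc by simp
    also have "refl a \<circ> (refl a \<circ> z) = z" using refl_comp_self[OF a0] by (metis comp_assoc id_comp)
    finally show ?thesis by (intro exI[of _ as]) (use as in \<open>auto simp: z_def\<close>)
  qed
qed

lemma D_down:
  assumes y: "y \<in> W" and c: "c \<in> P" and yc: "y c \<notin> P"
  shows "len (y \<circ> refl c) < len y"
proof -
  obtain as where as: "set as \<subseteq> simple_roots P" "length as = len y" "word_prod as = y"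
    using len_word[OF y] by blast
  obtain bs where bs: "set bs \<subseteq> simple_roots P" "length bs + 1 = length as"
    "word_prod bs = word_prod as \<circ> refl c" using deletion[OF as(1) c] yc as(3) by blast
  have "len (y \<circ> refl c) \<le> length bs" using len_le[OF bs(1)] bs(3) as(3) by simp
  then show ?thesis using bs(2) as(2) by simp
qed

lemma D_up:
  assumes y: "y \<in> W" and c: "c \<in> P" and yc: "y c \<in> P"
  shows "len y < len (y \<circ> refl c)"
proof -
  have cPhi: "c \<in> \<Phi>" using c PPhi by blast
  have c0: "c \<noteq> 0" using cPhi nz' by blast
  have y': "y \<circ> refl c \<in> W" using W_comp[OF y refl_W[OF cPhi]] .
  have "(y \<circ> refl c) c = - y c" using W_neg[OF y] refl_self[OF c0] by simp
  then have "(y \<circ> refl c) c \<notin> P" using P_neg[OF yc] by simp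
  then have "len (y \<circ> refl c \<circ> refl c) < len (y \<circ> refl c)" using D_down[OF y' c] by blast
  moreover have "y \<circ> refl c \<circ> refl c = y" using refl_comp_self[OF c0] by (simp add: o_assoc[symmetric])
  ultimately show ?thesis by simp
qed

lemma D_iff: "y \<in> W \<Longrightarrow> c \<in> P \<Longrightarrow> len y < len (y \<circ> refl c) \<longleftrightarrow> y c \<in> P"
  using D_up D_down by (meson order.asym)

lemma len_ne: "y \<in> W \<Longrightarrow> c \<in> P \<Longrightarrow> len (y \<circ> refl c) \<noteq> len y"
  using D_up D_down by (metis less_irrefl)

lemma bl_W: "bruhat_le \<Phi> P x y \<Longrightarrow> x \<in> W \<and> y \<in> W"
proof (induction rule: bruhat_le.induct)
  case (bruhat_refl x) then show ?case by simp
next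
  case (bruhat_step x y b)
  then show ?case using W_comp[of y "refl b"] refl_W[OF PPhi[OF bruhat_step(2)]] by blast
qed

lemma bl_len: "bruhat_le \<Phi> P x y \<Longrightarrow> x = y \<or> len x < len y"
proof (induction rule: bruhat_le.induct)
  case (bruhat_refl x) then show ?case by simp
next
  case (bruhat_step x y b)
  then show ?case by (metis less_trans)
qed

lemma bl_trans: "bruhat_le \<Phi> P y z \<Longrightarrow> bruhat_le \<Phi> P x y \<Longrightarrow> bruhat_le \<Phi> P x z"
  by (induction rule: bruhat_le.induct) (auto intro: bruhat_le.intros)

lemma bl_step: "y \<in> W \<Longrightarrow> c \<in> P \<Longrightarrow> len y < len (y \<circ> refl c) \<Longrightarrow> bruhat_le \<Phi> P y (y \<circ> refl c)"
  by (rule bruhat_le.bruhat_step[OF bruhat_le.bruhat_refl])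

lemma left_form: assumes y: "y \<in> W" and a: "a \<in> \<Phi>" shows "\<exists>c\<in>P. refl a \<circ> y = y \<circ> refl c"
proof -
  define c where "c = inv y a"
  have cPhi: "c \<in> \<Phi>" unfolding c_def using W_Phi[OF inv_W(1)[OF y] a] .
  have eq: "y \<circ> refl c = refl a \<circ> y" using W_conj[OF y, of c] inv_app[OF y] by (simp add: c_def)
  show ?thesis
  proof (cases "c \<in> P")
    case True then show ?thesis using eq[symmetric] by blast
  next
    case False
    have "- c \<in> P" using notP_neg[OF cPhi False] .
    moreover have "refl a \<circ> y = y \<circ> refl (- c)" using eq refl_neg[of c] by simp
    ultimately show ?thesis by blast
  qed
qed

lemma left_ne: "y \<in> W \<Longrightarrow> a \<in> \<Phi> \<Longrightarrow> len (refl a \<circ> y) \<noteq> len y"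
  using left_form len_ne by metis

lemma left_up: "y \<in> W \<Longrightarrow> a \<in> \<Phi> \<Longrightarrow> len y < len (refl a \<circ> y) \<Longrightarrow> bruhat_le \<Phi> P y (refl a \<circ> y)"
  using left_form bl_step by metis

lemma lift:
  assumes "bruhat_le \<Phi> P x u"
  shows "a \<in> simple_roots P \<Longrightarrow> len (refl a \<circ> u) < len u \<Longrightarrow> len x < len (refl a \<circ> x)
    \<Longrightarrow> bruhat_le \<Phi> P x (refl a \<circ> u)"
  using assms
proof (induction rule: bruhat_le.induct)
  case (bruhat_refl x)
  then show ?case by simp
next
  case (bruhat_step x y b)
  have aPhi: "a \<in> \<Phi>" using bruhat_step simple_Phi by blast
  have a0: "a \<noteq> 0" using aPhi nz' by blast
  have yW: "y \<in> W" using bl_W[OF bruhat_step(1)] by blast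
  have syW: "refl a \<circ> y \<in> W" using W_comp[OF refl_W[OF aPhi] yW] .
  have yb: "y b \<in> P" using D_iff[OF yW bruhat_step(2)] bruhat_step(3) by blast
  have ss: "\<And>f. refl a \<circ> (refl a \<circ> f) = f" using refl_comp_self[OF a0] by (metis comp_assoc id_comp)
  show ?case
  proof (cases "y \<circ> refl b = refl a \<circ> y")
    case True
    then have "refl a \<circ> (y \<circ> refl b) = y" using ss by metis
    then show ?thesis using bruhat_step(1) by metis
  next
    case False
    have "refl a (y b) \<in> P"
    proof (rule ccontr)
      assume "refl a (y b) \<notin> P"
      then have "y b = a" using simple_refl_pos[OF bruhat_step(5) yb] by blast
      then have "y \<circ> refl b = refl a \<circ> y" using W_conj[OF yW] by simp
      then show False using False by simp
    qed
    then have "(refl a \<circ> y) b \<in> P" by simp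
    then have "len (refl a \<circ> y) < len (refl a \<circ> y \<circ> refl b)" using D_iff[OF syW bruhat_step(2)] by blast
    then have st: "bruhat_le \<Phi> P (refl a \<circ> y) (refl a \<circ> (y \<circ> refl b))"
      using bl_step[OF syW bruhat_step(2)] by (simp add: o_assoc)
    show ?thesis
    proof (cases "len (refl a \<circ> y) < len y")
      case True
      then have "bruhat_le \<Phi> P x (refl a \<circ> y)" using bruhat_step by blast
      then show ?thesis using st bl_trans by blast
    next
      case False
      then have "len y < len (refl a \<circ> y)" using left_ne[OF yW aPhi] by linarith
      then have "bruhat_le \<Phi> P y (refl a \<circ> y)" using left_up[OF yW aPhi] by blast
      then show ?thesis using st bl_trans bruhat_step(1) by blast
    qed
  qed
qed

lemma lt_iff:
  assumes w: "w \<in> W" and g: "g \<in> P"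
  shows "bruhat_lt \<Phi> P (w \<circ> refl g) w \<longleftrightarrow> w g \<notin> P"
proof
  assume "bruhat_lt \<Phi> P (w \<circ> refl g) w"
  then have "len (w \<circ> refl g) < len w" using bl_len unfolding bruhat_lt_def by blast
  then show "w g \<notin> P" using D_iff[OF w g] by simp
next
  assume wg: "w g \<notin> P"
  have gPhi: "g \<in> \<Phi>" using g PPhi by blast
  have g0: "g \<noteq> 0" using gPhi nz' by blast
  have w': "w \<circ> refl g \<in> W" using W_comp[OF w refl_W[OF gPhi]] .
  have lt: "len (w \<circ> refl g) < len w" using D_down[OF w g wg] .
  have ww: "w \<circ> refl g \<circ> refl g = w" using refl_comp_self[OF g0] by (metis comp_assoc comp_id)
  have "bruhat_le \<Phi> P (w \<circ> refl g) (w \<circ> refl g \<circ> refl g)"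
    using bl_step[OF w' g] lt ww by simp
  then show "bruhat_lt \<Phi> P (w \<circ> refl g) w" unfolding bruhat_lt_def using ww lt by auto
qed

theorem main:
  assumes x: "x \<in> W" and w: "w \<in> W" and al: "a \<in> simple_roots P"
    and xw: "bruhat_lt \<Phi> P x w"
    and sw: "bruhat_lt \<Phi> P (refl a \<circ> w) w"
    and sx: "bruhat_lt \<Phi> P x (refl a \<circ> x)"
  shows "S_set \<Phi> P x (refl a \<circ> w) = S_set \<Phi> P x w - {- (inv w a)}"
proof -
  have aPhi: "a \<in> \<Phi>" using al simple_Phi by blast
  have a0: "a \<noteq> 0" using aPhi nz' by blast
  have ss: "\<And>f. refl a \<circ> (refl a \<circ> f) = f" using refl_comp_self[OF a0] by (metis comp_assoc id_comp)
  have swW: "refl a \<circ> w \<in> W" using W_comp[OF refl_W[OF aPhi] w] .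
  have lsw: "len (refl a \<circ> w) < len w" using sw bl_len unfolding bruhat_lt_def by blast
  have lsx: "len x < len (refl a \<circ> x)" using sx bl_len unfolding bruhat_lt_def by blast
  have key: "\<And>g. w \<circ> refl g = refl a \<circ> w \<Longrightarrow> bruhat_lt \<Phi> P (refl a \<circ> w \<circ> refl g) (refl a \<circ> w) \<Longrightarrow> False"
  proof -
    fix g assume e: "w \<circ> refl g = refl a \<circ> w" and lt: "bruhat_lt \<Phi> P (refl a \<circ> w \<circ> refl g) (refl a \<circ> w)"
    have "refl a \<circ> w \<circ> refl g = w" using e ss by (metis comp_assoc)
    then have "bruhat_lt \<Phi> P w (refl a \<circ> w)" using lt by simp
    then have "len w < len (refl a \<circ> w)" using bl_len unfolding bruhat_lt_def by blast
    then show False using lsw by simp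
  qed
  have conj0: "w \<circ> refl (inv w a) = refl a \<circ> w" using W_conj[OF w, of "inv w a"] inv_app[OF w] by simp
  have up: "\<And>v. bruhat_le \<Phi> P x v \<Longrightarrow> bruhat_le \<Phi> P x (refl a \<circ> v)"
  proof -
    fix v assume xv: "bruhat_le \<Phi> P x v"
    have vW: "v \<in> W" using bl_W[OF xv] by blast
    show "bruhat_le \<Phi> P x (refl a \<circ> v)"
    proof (cases "len (refl a \<circ> v) < len v")
      case True
      then show ?thesis using lift[OF xv al _ lsx] by blast
    next
      case False
      then have "len v < len (refl a \<circ> v)" using left_ne[OF vW aPhi] by linarith
      then have "bruhat_le \<Phi> P v (refl a \<circ> v)" using left_up[OF vW aPhi] by blast
      then show ?thesis using xv bl_trans by blast
    qed
  qed
  show ?thesis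
  proof (rule set_eqI, rule iffI)
    fix g assume gS: "g \<in> S_set \<Phi> P x (refl a \<circ> w)"
    then have g: "g \<in> P" and xv: "bruhat_le \<Phi> P x (refl a \<circ> w \<circ> refl g)"
      and vlt: "bruhat_lt \<Phi> P (refl a \<circ> w \<circ> refl g) (refl a \<circ> w)"
      unfolding S_set_def by auto
    have "(refl a \<circ> w) g \<notin> P" using lt_iff[OF swW g] vlt by blast
    then have sg: "refl a (w g) \<notin> P" by simp
    have ne: "w \<circ> refl g \<noteq> refl a \<circ> w" using key vlt by blast
    have wg: "w g \<notin> P"
    proof
      assume "w g \<in> P"
      then have "w g = a" using simple_refl_pos[OF al] sg by blast
      then have "w \<circ> refl g = refl a \<circ> w" using W_conj[OF w] by simp
      then show False using ne by simp
    qed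
    have glt: "bruhat_lt \<Phi> P (w \<circ> refl g) w" using lt_iff[OF w g] wg by blast
    have gne: "g \<noteq> - inv w a"
    proof
      assume "g = - inv w a"
      then have "w \<circ> refl g = refl a \<circ> w" using conj0 refl_neg by metis
      then show False using ne by simp
    qed
    have "refl a \<circ> (refl a \<circ> w \<circ> refl g) = w \<circ> refl g" using ss by (metis comp_assoc)
    then have "bruhat_le \<Phi> P x (w \<circ> refl g)" using up[OF xv] by metis
    then show "g \<in> S_set \<Phi> P x w - {- inv w a}" using g glt gne unfolding S_set_def by auto
  next
    fix g assume gS: "g \<in> S_set \<Phi> P x w - {- inv w a}"
    then have g: "g \<in> P" and xu: "bruhat_le \<Phi> P x (w \<circ> refl g)"
      and ult: "bruhat_lt \<Phi> P (w \<circ> refl g) w" and gne: "g \<noteq> - inv w a"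
      unfolding S_set_def by auto
    have wg: "w g \<notin> P" using lt_iff[OF w g] ult by blast
    have wgPhi: "w g \<in> \<Phi>" using W_Phi[OF w PPhi[OF g]] .
    have mwg: "- w g \<in> P" using notP_neg[OF wgPhi wg] .
    have swg: "refl a (w g) \<notin> P"
    proof
      assume h: "refl a (w g) \<in> P"
      have "refl a (- w g) = - refl a (w g)" using W_neg[OF refl_W[OF aPhi]] .
      then have "refl a (- w g) \<notin> P" using P_neg[OF h] by simp
      then have "- w g = a" using simple_refl_pos[OF al mwg] by blast
      then have "w g = - a" by (metis minus_minus)
      then have "inv w (w g) = - inv w a" using W_neg[OF inv_W(1)[OF w]] by simp
      moreover have "inv w (w g) = g" using inv_W(2)[OF w] by (metis comp_apply id_apply)
      ultimately show False using gne by simp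
    qed
    then have "(refl a \<circ> w) g \<notin> P" by simp
    then have vlt: "bruhat_lt \<Phi> P (refl a \<circ> w \<circ> refl g) (refl a \<circ> w)" using lt_iff[OF swW g] by blast
    have "bruhat_le \<Phi> P x (refl a \<circ> (w \<circ> refl g))" using up[OF xu] .
    then have "bruhat_le \<Phi> P x (refl a \<circ> w \<circ> refl g)" by (simp add: comp_assoc)
    then show "g \<in> S_set \<Phi> P x (refl a \<circ> w)" using g vlt unfolding S_set_def by auto
  qed
qed

end

theorem lemma5p4:
  fixes \<Phi> P :: "'a::euclidean_space set" and x w :: "'a \<Rightarrow> 'a" and \<alpha> :: 'a
  assumes "root_system \<Phi>" and "positive_system \<Phi> P"
    and "x \<in> weyl_group \<Phi>" and "w \<in> weyl_group \<Phi>"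
    and "\<alpha> \<in> simple_roots P"
    and "bruhat_lt \<Phi> P x w"
    and "bruhat_lt \<Phi> P (refl \<alpha> \<circ> w) w"
    and "bruhat_lt \<Phi> P x (refl \<alpha> \<circ> x)"
    and "card (S_set \<Phi> P x w) = weyl_length P w - weyl_length P x"
  shows "S_set \<Phi> P x (refl \<alpha> \<circ> w) = S_set \<Phi> P x w - {- (inv w \<alpha>)}"
proof -
  interpret rs \<Phi> P using assms(1,2) by unfold_locales
  show ?thesis using main assms(3-8) by blast
qed

end
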